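(* Let $X$ be a topological space. The idempotents of $N(X)$ are precisely the characteristic functions $\chi_U$ with $U$ a regular open subset of $X$, and $U\mapsto\chi_U$ is a boolean isomorphism from the boolean algebra ${\sf RO}(X)$ of regular open subsets of $X$ onto the boolean algebra of idempotents of $N(X)$.
   Context: $B(X)$ is the set of bounded real-valued functions on $X$. For $f\in B(X)$ and $x\in X$, with $\mathcal N_x$ the set of open neighborhoods of $x$: $f_*(x)=\sup\{\inf f[U]\mid U\in\mathcal N_x\}$, $f^*(x)=\inf\{\sup f[U]\mid U\in\mathcal N_x\}$, and $f^\#=(f^* )_*$. $f$ is normal if $f=f^\#$, and $N(X)=\{f\in B(X)\mid f=f^\#\}$. $N(X)$ is a Dedekind complete bounded archimedean $\ell$-algebra whose operations (addition, multiplication, scalar multiplication, binary joins and meets) are the normalizations $(\cdot)^\#$ of the corresponding pointwise operations; in particular positive scalar multiplication and meets are pointwise. The idempotents of a commutative ring form a boolean algebra with $e\wedge f=ef$, $e\vee f=e+f-ef$, $\lnot e=1-e$. A set $U$ is regular open if $U={\sf int}\,{\sf cl}(U)$. *)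

theory Defs
  imports "HOL-Analysis.Analysis"
begin

text \<open>The space X is the (arbitrary) topological space given by the type 'a.\<close>

definition bdd_fun :: "('a \<Rightarrow> real) \<Rightarrow> bool" where
  "bdd_fun f \<longleftrightarrow> (\<exists>M. \<forall>x. \<bar>f x\<bar> \<le> M)"

definition lower_fn :: "('a::topological_space \<Rightarrow> real) \<Rightarrow> 'a \<Rightarrow> real" where
  "lower_fn f x = (SUP U \<in> {U. open U \<and> x \<in> U}. INF y \<in> U. f y)"

definition upper_fn :: "('a::topological_space \<Rightarrow> real) \<Rightarrow> 'a \<Rightarrow> real" where
  "upper_fn f x = (INF U \<in> {U. open U \<and> x \<in> U}. SUP y \<in> U. f y)"

definition normalize :: "('a::topological_space \<Rightarrow> real) \<Rightarrow> 'a \<Rightarrow> real" where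
  "normalize f = lower_fn (upper_fn f)"

definition normal_funs :: "('a::topological_space \<Rightarrow> real) set" where
  "normal_funs = {f. bdd_fun f \<and> normalize f = f}"

definition N_add :: "('a::topological_space \<Rightarrow> real) \<Rightarrow> ('a \<Rightarrow> real) \<Rightarrow> 'a \<Rightarrow> real" where
  "N_add f g = normalize (\<lambda>x. f x + g x)"

definition N_sub :: "('a::topological_space \<Rightarrow> real) \<Rightarrow> ('a \<Rightarrow> real) \<Rightarrow> 'a \<Rightarrow> real" where
  "N_sub f g = normalize (\<lambda>x. f x - g x)"

definition N_mult :: "('a::topological_space \<Rightarrow> real) \<Rightarrow> ('a \<Rightarrow> real) \<Rightarrow> 'a \<Rightarrow> real" where
  "N_mult f g = normalize (\<lambda>x. f x * g x)"

definition regular_open :: "'a::topological_space set \<Rightarrow> bool" where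
  "regular_open U \<longleftrightarrow> U = interior (closure U)"

definition N_idempotents :: "('a::topological_space \<Rightarrow> real) set" where
  "N_idempotents = {e \<in> normal_funs. N_mult e e = e}"

end

theory Submission imports Defs begin

lemma bdd_abs:
  fixes f :: "'b \<Rightarrow> real"
  assumes "\<And>x. x \<in> U \<Longrightarrow> \<bar>f x\<bar> \<le> M"
  shows "bdd_below (f ` U)" "bdd_above (f ` U)"
proof -
  show "bdd_below (f ` U)"
  proof (rule bdd_belowI2[of _ "-M"])
    fix x assume "x \<in> U" then have "\<bar>f x\<bar> \<le> M" by (rule assms) then show "-M \<le> f x" by linarith
  qed
  show "bdd_above (f ` U)"
  proof (rule bdd_aboveI2[of _ _ "M"])
    fix x assume "x \<in> U" then have "\<bar>f x\<bar> \<le> M" by (rule assms) then show "f x \<le> M" by linarith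
  qed
qed

lemma inf_bounds:
  fixes f :: "'b \<Rightarrow> real"
  assumes "\<And>x. x \<in> U \<Longrightarrow> \<bar>f x\<bar> \<le> M" "U \<noteq> {}"
  shows "\<bar>(INF y\<in>U. f y)\<bar> \<le> M" "\<bar>(SUP y\<in>U. f y)\<bar> \<le> M"
proof -
  note bb = bdd_abs[OF assms(1)]
  obtain z where z: "z \<in> U" using assms(2) by blast
  have "(INF y\<in>U. f y) \<le> f z" by (rule cINF_lower[OF bb(1) z])
  moreover have "-M \<le> (INF y\<in>U. f y)"
  proof (rule cINF_greatest[OF assms(2)])
    fix x assume "x \<in> U" then have "\<bar>f x\<bar> \<le> M" by (rule assms) then show "-M \<le> f x" by linarith
  qed
  ultimately show "\<bar>(INF y\<in>U. f y)\<bar> \<le> M" using assms(1)[OF z] by (auto simp: abs_le_iff)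
  have "f z \<le> (SUP y\<in>U. f y)" by (rule cSUP_upper[OF z bb(2)])
  moreover have "(SUP y\<in>U. f y) \<le> M" using assms by (intro cSUP_least) (auto simp: abs_le_iff)
  ultimately show "\<bar>(SUP y\<in>U. f y)\<bar> \<le> M" using assms(1)[OF z] by (auto simp: abs_le_iff)
qed

lemma nbhds_ne: "{U::'a::topological_space set. open U \<and> x \<in> U} \<noteq> {}" by auto

lemma INF_fam_bound: fixes f :: "'a::topological_space \<Rightarrow> real"
  assumes "\<And>x. \<bar>f x\<bar> \<le> M"
  shows "\<And>U. U \<in> {U. open U \<and> x \<in> U} \<Longrightarrow> \<bar>(INF y\<in>U. f y)\<bar> \<le> M"
    "\<And>U. U \<in> {U. open U \<and> x \<in> U} \<Longrightarrow> \<bar>(SUP y\<in>U. f y)\<bar> \<le> M"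
proof -
  fix U :: "'a set" assume "U \<in> {U. open U \<and> x \<in> U}"
  then have "U \<noteq> {}" by blast
  then show "\<bar>(INF y\<in>U. f y)\<bar> \<le> M" by (rule inf_bounds(1)[OF assms])
next
  fix U :: "'a set" assume "U \<in> {U. open U \<and> x \<in> U}"
  then have "U \<noteq> {}" by blast
  then show "\<bar>(SUP y\<in>U. f y)\<bar> \<le> M" by (rule inf_bounds(2)[OF assms])
qed

lemma lu_bound: fixes f :: "'a::topological_space \<Rightarrow> real"
  assumes "\<And>x. \<bar>f x\<bar> \<le> M" shows "\<bar>lower_fn f x\<bar> \<le> M" "\<bar>upper_fn f x\<bar> \<le> M"
proof -
  show "\<bar>lower_fn f x\<bar> \<le> M"  unfolding lower_fn_def
  by (rule inf_bounds(2)[of _ "\<lambda>U. INF y\<in>U. f y", OF INF_fam_bound(1)[OF assms] nbhds_ne])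
  show "\<bar>upper_fn f x\<bar> \<le> M"  unfolding upper_fn_def
  by (rule inf_bounds(1)[of _ "\<lambda>U. SUP y\<in>U. f y", OF INF_fam_bound(2)[OF assms] nbhds_ne])
qed

lemma lower_eq: fixes f :: "'a::topological_space \<Rightarrow> real"
  assumes M: "\<And>y. \<bar>f y\<bar> \<le> M" and U0: "open U0" "x \<in> U0" "\<And>y. y \<in> U0 \<Longrightarrow> c \<le> f y"
    and le: "\<And>U. open U \<Longrightarrow> x \<in> U \<Longrightarrow> \<exists>y\<in>U. f y \<le> c"
  shows "lower_fn f x = c"
  unfolding lower_fn_def
proof (rule antisym)
  show "(SUP U\<in>{U. open U \<and> x \<in> U}. INF y\<in>U. f y) \<le> c"
  proof (rule cSUP_least[OF nbhds_ne])
    fix U assume "U \<in> {U. open U \<and> x \<in> U}"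
    then obtain y where "y \<in> U" "f y \<le> c" using le by blast
    then show "(INF y\<in>U. f y) \<le> c" using bdd_abs(1)[of U f M] M by (meson cINF_lower2)
  qed
  have "c \<le> (INF y\<in>U0. f y)" using U0 by (intro cINF_greatest) auto
  moreover have "bdd_above ((\<lambda>U. INF y\<in>U. f y) ` {U. open U \<and> x \<in> U})"
    by (rule bdd_abs(2)[OF INF_fam_bound(1)[OF M]])
  ultimately show "c \<le> (SUP U\<in>{U. open U \<and> x \<in> U}. INF y\<in>U. f y)"
    using U0 by (intro cSUP_upper2[where x=U0]) auto
qed

lemma upper_eq: fixes f :: "'a::topological_space \<Rightarrow> real"
  assumes M: "\<And>y. \<bar>f y\<bar> \<le> M" and U0: "open U0" "x \<in> U0" "\<And>y. y \<in> U0 \<Longrightarrow> f y \<le> c"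
    and le: "\<And>U. open U \<Longrightarrow> x \<in> U \<Longrightarrow> \<exists>y\<in>U. c \<le> f y"
  shows "upper_fn f x = c"
  unfolding upper_fn_def
proof (rule antisym)
  show "c \<le> (INF U\<in>{U. open U \<and> x \<in> U}. SUP y\<in>U. f y)"
  proof (rule cINF_greatest[OF nbhds_ne])
    fix U assume "U \<in> {U. open U \<and> x \<in> U}"
    then obtain y where "y \<in> U" "c \<le> f y" using le by blast
    then show "c \<le> (SUP y\<in>U. f y)" using bdd_abs(2)[of U f M] M by (meson cSUP_upper2)
  qed
  have "(SUP y\<in>U0. f y) \<le> c" using U0 by (intro cSUP_least) auto
  moreover have "bdd_below ((\<lambda>U. SUP y\<in>U. f y) ` {U. open U \<and> x \<in> U})"
    by (rule bdd_abs(1)[OF INF_fam_bound(2)[OF M]])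
  ultimately show "(INF U\<in>{U. open U \<and> x \<in> U}. SUP y\<in>U. f y) \<le> c"
    using U0 by (intro cINF_lower2[where x=U0]) auto
qed

lemma ind_abs: "\<bar>(indicator A x :: real)\<bar> \<le> 1" by (simp add: indicator_def)

lemma not_interior_E: assumes "x \<notin> interior A" "open U" "x \<in> U" obtains y where "y \<in> U" "y \<notin> A"
  using assms interiorI by blast

lemma closure_E: assumes "x \<in> closure A" "open U" "x \<in> U" obtains y where "y \<in> U" "y \<in> A"
  using assms closure_iff_nhds_not_empty by blast

lemma lower_ind: "lower_fn (indicator A :: 'a::topological_space \<Rightarrow> real) = indicator (interior A)"
proof
  fix x :: 'a
  show "lower_fn (indicator A :: 'a \<Rightarrow> real) x = indicator (interior A) x"
  proof (cases "x \<in> interior A")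
    case True
    have "lower_fn (indicator A :: 'a \<Rightarrow> real) x = 1"
      by (rule lower_eq[OF ind_abs, of "interior A"]) (use True interior_subset in \<open>auto simp: indicator_def\<close>)
    then show ?thesis using True by simp
  next
    case False
    have "lower_fn (indicator A :: 'a \<Rightarrow> real) x = 0"
    proof (rule lower_eq[OF ind_abs, of UNIV])
      fix U :: "'a set" assume "open U" "x \<in> U"
      then obtain y where "y \<in> U" "y \<notin> A" by (rule not_interior_E[OF False])
      then show "\<exists>y\<in>U. indicator A y \<le> (0::real)" by (intro bexI[of _ y]) simp_all
    qed auto
    then show ?thesis using False by simp
  qed
qed

lemma upper_ind: "upper_fn (indicator A :: 'a::topological_space \<Rightarrow> real) = indicator (closure A)"
proof
  fix x :: 'a
  show "upper_fn (indicator A :: 'a \<Rightarrow> real) x = indicator (closure A) x"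
  proof (cases "x \<in> closure A")
    case True
    have "upper_fn (indicator A :: 'a \<Rightarrow> real) x = 1"
    proof (rule upper_eq[OF ind_abs, of UNIV])
      fix U :: "'a set" assume "open U" "x \<in> U"
      then obtain y where "y \<in> U" "y \<in> A" by (rule closure_E[OF True])
      then show "\<exists>y\<in>U. (1::real) \<le> indicator A y" by (intro bexI[of _ y]) simp_all
    qed auto
    then show ?thesis using True by simp
  next
    case False
    have "upper_fn (indicator A :: 'a \<Rightarrow> real) x = 0"
      by (rule upper_eq[OF ind_abs, of "- closure A"]) (use False closure_subset in \<open>auto simp: indicator_def\<close>)
    then show ?thesis using False by simp
  qed
qed

lemma normalize_ind: "normalize (indicator A :: 'a::topological_space \<Rightarrow> real) = indicator (interior (closure A))"
  unfolding normalize_def upper_ind lower_ind ..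

lemma pair_abs: "\<bar>(indicator A x + indicator B x :: real)\<bar> \<le> 2" by (simp add: indicator_def)

lemma lower_pair: assumes "A \<subseteq> B"
  shows "lower_fn (\<lambda>x. indicator A x + indicator B x :: real) = (\<lambda>x::'a::topological_space. indicator (interior A) x + indicator (interior B) x)"
proof
  fix x :: 'a
  have iAB: "interior A \<subseteq> interior B" using assms interior_mono by blast
  consider "x \<in> interior A" | "x \<notin> interior A" "x \<in> interior B" | "x \<notin> interior B" by blast
  then show "lower_fn (\<lambda>x. indicator A x + indicator B x :: real) x = indicator (interior A) x + indicator (interior B) x"
  proof cases
    case 1
    have "lower_fn (\<lambda>x. indicator A x + indicator B x :: real) x = 2"
      by (rule lower_eq[OF pair_abs, of "interior A"]) (use 1 assms interior_subset in \<open>auto simp: indicator_def\<close>)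
    then show ?thesis using 1 iAB by auto
  next
    case 2
    have "lower_fn (\<lambda>x. indicator A x + indicator B x :: real) x = 1"
      by (rule lower_eq[OF pair_abs, of "interior B"]) (use 2 assms interior_subset in \<open>auto simp: indicator_def elim: not_interior_E[OF 2(1)]\<close>)
    then show ?thesis using 2 by auto
  next
    case 3
    have "lower_fn (\<lambda>x. indicator A x + indicator B x :: real) x = 0"
      by (rule lower_eq[OF pair_abs, of UNIV]) (use 3 assms in \<open>auto simp: indicator_def elim: not_interior_E[OF 3(1)]\<close>)
    moreover have "x \<notin> interior A" using 3 iAB by auto
    ultimately show ?thesis using 3 by auto
  qed
qed

lemma upper_pair: assumes "A \<subseteq> B"
  shows "upper_fn (\<lambda>x. indicator A x + indicator B x :: real) = (\<lambda>x::'a::topological_space. indicator (closure A) x + indicator (closure B) x)"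
proof
  fix x :: 'a
  have iAB: "closure A \<subseteq> closure B" using assms closure_mono by blast
  consider "x \<in> closure A" | "x \<notin> closure A" "x \<in> closure B" | "x \<notin> closure B" by blast
  then show "upper_fn (\<lambda>x. indicator A x + indicator B x :: real) x = indicator (closure A) x + indicator (closure B) x"
  proof cases
    case 1
    have "upper_fn (\<lambda>x. indicator A x + indicator B x :: real) x = 2"
      by (rule upper_eq[OF pair_abs, of UNIV]) (use 1 assms in \<open>auto simp: indicator_def elim: closure_E[OF 1]\<close>)
    then show ?thesis using 1 iAB by auto
  next
    case 2
    have "upper_fn (\<lambda>x. indicator A x + indicator B x :: real) x = 1"
      by (rule upper_eq[OF pair_abs, of "- closure A"]) (use 2 assms closure_subset in \<open>auto simp: indicator_def elim: closure_E[OF 2(2)]\<close>)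
    then show ?thesis using 2 by auto
  next
    case 3
    have "upper_fn (\<lambda>x. indicator A x + indicator B x :: real) x = 0"
      by (rule upper_eq[OF pair_abs, of "- closure B"]) (use 3 assms closure_subset in \<open>auto simp: indicator_def\<close>)
    moreover have "x \<notin> closure A" using 3 iAB by auto
    ultimately show ?thesis using 3 by auto
  qed
qed

lemma normalize_pair: assumes "A \<subseteq> B"
  shows "normalize (\<lambda>x. indicator A x + indicator B x :: real) = (\<lambda>x::'a::topological_space. indicator (interior (closure A)) x + indicator (interior (closure B)) x)"
  unfolding normalize_def upper_pair[OF assms] by (rule lower_pair) (use assms closure_mono in blast)

lemma upper_comp:
  fixes f :: "'a::topological_space \<Rightarrow> real" and \<phi> :: "real \<Rightarrow> real"
  assumes M: "\<And>x. \<bar>f x\<bar> \<le> M" and mono: "mono \<phi>" and cont: "\<And>a. isCont \<phi> a"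
  shows "upper_fn (\<lambda>x. \<phi> (f x)) x = \<phi> (upper_fn f x)"
proof -
  let ?N = "{U. open U \<and> x \<in> U}"
  have bd: "bdd_below ((\<lambda>U. SUP y\<in>U. f y) ` ?N)"
    by (rule bdd_abs(1)) (rule INF_fam_bound(2)[OF M])
  have "\<And>U. U \<in> ?N \<Longrightarrow> (SUP y\<in>U. \<phi> (f y)) = \<phi> (SUP y\<in>U. f y)"
  proof -
    fix U assume U: "U \<in> ?N"
    have "\<phi> (Sup (f ` U)) = (SUP s\<in>f ` U. \<phi> s)"
      by (rule continuous_at_Sup_mono[OF mono continuous_at_imp_continuous_at_within[OF cont]])
         (use U bdd_abs(2)[of U f M] M in auto)
    then show "(SUP y\<in>U. \<phi> (f y)) = \<phi> (SUP y\<in>U. f y)" by (simp add: image_image)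
  qed
  then have "upper_fn (\<lambda>x. \<phi> (f x)) x = (INF U\<in>?N. \<phi> (SUP y\<in>U. f y))"
    unfolding upper_fn_def by (intro INF_cong) auto
  also have "\<dots> = (INF s\<in>(\<lambda>U. SUP y\<in>U. f y) ` ?N. \<phi> s)" by (simp add: image_image)
  also have "\<dots> = \<phi> (Inf ((\<lambda>U. SUP y\<in>U. f y) ` ?N))"
    by (rule continuous_at_Inf_mono[OF mono continuous_at_imp_continuous_at_within[OF cont], symmetric])
       (use nbhds_ne bd in auto)
  finally show ?thesis unfolding upper_fn_def .
qed

lemma lower_comp:
  fixes f :: "'a::topological_space \<Rightarrow> real" and \<phi> :: "real \<Rightarrow> real"
  assumes M: "\<And>x. \<bar>f x\<bar> \<le> M" and mono: "mono \<phi>" and cont: "\<And>a. isCont \<phi> a"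
  shows "lower_fn (\<lambda>x. \<phi> (f x)) x = \<phi> (lower_fn f x)"
proof -
  let ?N = "{U. open U \<and> x \<in> U}"
  have bd: "bdd_above ((\<lambda>U. INF y\<in>U. f y) ` ?N)"
    by (rule bdd_abs(2)) (rule INF_fam_bound(1)[OF M])
  have "\<And>U. U \<in> ?N \<Longrightarrow> (INF y\<in>U. \<phi> (f y)) = \<phi> (INF y\<in>U. f y)"
  proof -
    fix U assume U: "U \<in> ?N"
    have "\<phi> (Inf (f ` U)) = (INF s\<in>f ` U. \<phi> s)"
      by (rule continuous_at_Inf_mono[OF mono continuous_at_imp_continuous_at_within[OF cont]])
         (use U bdd_abs(1)[of U f M] M in auto)
    then show "(INF y\<in>U. \<phi> (f y)) = \<phi> (INF y\<in>U. f y)" by (simp add: image_image)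
  qed
  then have "lower_fn (\<lambda>x. \<phi> (f x)) x = (SUP U\<in>?N. \<phi> (INF y\<in>U. f y))"
    unfolding lower_fn_def by (intro SUP_cong) auto
  also have "\<dots> = (SUP s\<in>(\<lambda>U. INF y\<in>U. f y) ` ?N. \<phi> s)" by (simp add: image_image)
  also have "\<dots> = \<phi> (Sup ((\<lambda>U. INF y\<in>U. f y) ` ?N))"
    by (rule continuous_at_Sup_mono[OF mono continuous_at_imp_continuous_at_within[OF cont], symmetric])
       (use nbhds_ne bd in auto)
  finally show ?thesis unfolding lower_fn_def .
qed

lemma normalize_comp:
  fixes f :: "'a::topological_space \<Rightarrow> real" and \<phi> :: "real \<Rightarrow> real"
  assumes M: "\<And>x. \<bar>f x\<bar> \<le> M" and mono: "mono \<phi>" and cont: "\<And>a. isCont \<phi> a"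
  shows "normalize (\<lambda>x. \<phi> (f x)) = (\<lambda>x. \<phi> (normalize f x))"
proof -
  have "upper_fn (\<lambda>x. \<phi> (f x)) = (\<lambda>x. \<phi> (upper_fn f x))"
    by (rule ext) (rule upper_comp[OF M mono cont])
  moreover have "lower_fn (\<lambda>x. \<phi> (upper_fn f x)) = (\<lambda>x. \<phi> (lower_fn (upper_fn f) x))"
    by (rule ext) (rule lower_comp[OF lu_bound(2)[OF M] mono cont])
  ultimately show ?thesis unfolding normalize_def by simp
qed

lemma ind_inj: assumes h: "(indicator U :: 'a \<Rightarrow> real) = indicator V" shows "U = V"
proof (rule set_eqI)
  fix x from h have "indicator U x = (indicator V x::real)" by simp
  then show "x \<in> U \<longleftrightarrow> x \<in> V" by (cases "x \<in> U"; cases "x \<in> V") simp_all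
qed

lemma ro_intcl: "regular_open (interior (closure S))"
proof -
  have "interior (closure S) \<subseteq> interior (closure (interior (closure S)))"
    by (intro interior_maximal closure_subset) simp
  moreover have "closure (interior (closure S)) \<subseteq> closure S"
    by (intro closure_minimal interior_subset) simp
  then have "interior (closure (interior (closure S))) \<subseteq> interior (closure S)"
    by (rule interior_mono)
  ultimately show ?thesis unfolding regular_open_def by blast
qed

lemma ro_open: "regular_open U \<Longrightarrow> open U"
  unfolding regular_open_def by (metis open_interior)

lemma ro_inter: assumes "regular_open U" "regular_open V"
  shows "interior (closure (U \<inter> V)) = U \<inter> V"
proof
  have "interior (closure (U \<inter> V)) \<subseteq> interior (closure U)" "interior (closure (U \<inter> V)) \<subseteq> interior (closure V)"
    by (intro interior_mono closure_mono; blast)+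
  then show "interior (closure (U \<inter> V)) \<subseteq> U \<inter> V" using assms unfolding regular_open_def by blast
  show "U \<inter> V \<subseteq> interior (closure (U \<inter> V))"
    by (intro interior_maximal closure_subset) (use ro_open[OF assms(1)] ro_open[OF assms(2)] in auto)
qed

lemma idem_ind: assumes "e \<in> normal_funs" "N_mult e e = e"
  shows "\<exists>U. regular_open U \<and> e = indicator U"
proof -
  from assms obtain M where M: "\<And>x. \<bar>e x\<bar> \<le> M" and ne: "normalize e = e"
    unfolding normal_funs_def bdd_fun_def by blast
  have M2: "\<bar>e x * e x\<bar> \<le> M * M" for x unfolding abs_mult by (rule mult_mono) (use M[of x] in auto)
  have mx: "mono (\<lambda>t::real. max t 0)" by (auto simp: mono_def)
  have cx: "isCont (\<lambda>t::real. max t 0) a" for a by (intro continuous_intros)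
  have ee: "normalize (\<lambda>x. e x * e x) = e" using assms(2) unfolding N_mult_def .
  have "normalize (\<lambda>x. max (e x * e x) 0) = (\<lambda>x. max (normalize (\<lambda>x. e x * e x) x) 0)"
    by (rule normalize_comp[OF M2 mx cx])
  moreover have "(\<lambda>x. max (e x * e x) 0) = (\<lambda>x. e x * e x)" by (auto simp: fun_eq_iff)
  ultimately have "e = (\<lambda>x. max (e x) 0)" using ee by simp
  then have pos: "e x \<ge> 0" for x by (metis max.cobounded2)
  have my: "mono (\<lambda>t::real. (max t 0)^2)" by (auto simp: mono_def intro!: power_mono)
  have cy: "isCont (\<lambda>t::real. (max t 0)^2) a" for a by (intro continuous_intros)
  have "normalize (\<lambda>x. (max (e x) 0)^2) = (\<lambda>x. (max (normalize e x) 0)^2)"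
    by (rule normalize_comp[OF M my cy])
  moreover have "(\<lambda>x. (max (e x) 0)^2) = (\<lambda>x. e x * e x)" using pos by (auto simp: fun_eq_iff power2_eq_square)
  ultimately have "e = (\<lambda>x. e x * e x)" using ee ne pos by (simp add: power2_eq_square max_def)
  then have e01: "e x = 0 \<or> e x = 1" for x by (metis mult_cancel_left1 mult_zero_left) 
  define U where "U = {x. e x = 1}"
  have eU: "e = indicator U" using e01 by (auto simp: fun_eq_iff U_def indicator_def)
  then have "indicator U = (indicator (interior (closure U)) :: _ \<Rightarrow> real)" using ne normalize_ind by metis
  then have "U = interior (closure U)" by (rule ind_inj)
  then show ?thesis using eU unfolding regular_open_def by blast
qed

lemma ind_normal: assumes "regular_open U" shows "(indicator U :: 'a::topological_space \<Rightarrow> real) \<in> N_idempotents"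
proof -
  have n: "normalize (indicator U :: 'a \<Rightarrow> real) = indicator U"
    using assms normalize_ind unfolding regular_open_def by metis
  have "(\<lambda>x. indicator U x * indicator U x :: real) = indicator U"
    by (auto simp: fun_eq_iff indicator_def)
  moreover have "bdd_fun (indicator U :: 'a \<Rightarrow> real)" unfolding bdd_fun_def by (intro exI[of _ 1] allI ind_abs)
  ultimately show ?thesis using n unfolding N_idempotents_def normal_funs_def N_mult_def
    by simp
qed

theorem mainTheorem11:
  shows "N_idempotents = (\<lambda>U. indicator U :: 'a::topological_space \<Rightarrow> real) ` {U. regular_open U}
    \<and> bij_betw (\<lambda>U. indicator U :: 'a \<Rightarrow> real) {U. regular_open U} N_idempotents
    \<and> (\<forall>U V::'a set. regular_open U \<longrightarrow> regular_open V \<longrightarrow>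
           indicator (U \<inter> V) = N_mult (indicator U) (indicator V)
         \<and> indicator (interior (closure (U \<union> V))) =
             N_sub (N_add (indicator U) (indicator V)) (N_mult (indicator U) (indicator V)))
    \<and> (\<forall>U::'a set. regular_open U \<longrightarrow>
           indicator (interior (- U)) = N_sub (\<lambda>_. 1) (indicator U))"
proof (intro conjI allI impI)
  show img: "N_idempotents = (\<lambda>U. indicator U :: 'a::topological_space \<Rightarrow> real) ` {U. regular_open U}"
  proof
    show "N_idempotents \<subseteq> (\<lambda>U. indicator U :: 'a \<Rightarrow> real) ` {U. regular_open U}"
      using idem_ind unfolding N_idempotents_def by blast
    show "(\<lambda>U. indicator U :: 'a \<Rightarrow> real) ` {U. regular_open U} \<subseteq> N_idempotents"
      using ind_normal by blast
  qed
  show "bij_betw (\<lambda>U. indicator U :: 'a \<Rightarrow> real) {U. regular_open U} N_idempotents"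
    unfolding bij_betw_def
  proof
    show "inj_on (\<lambda>U. indicator U :: 'a \<Rightarrow> real) {U. regular_open U}"
      by (rule inj_onI) (rule ind_inj)
  qed (use img in simp)
next
  fix U V :: "'a set" assume U: "regular_open U" and V: "regular_open V"
  have m: "N_mult (indicator U) (indicator V) = (indicator (U \<inter> V) :: 'a \<Rightarrow> real)"
  proof -
    have "(\<lambda>x. indicator U x * indicator V x :: real) = indicator (U \<inter> V)"
      by (simp add: fun_eq_iff indicator_inter_arith)
    then show ?thesis unfolding N_mult_def by (simp add: normalize_ind ro_inter[OF U V])
  qed
  then show "indicator (U \<inter> V) = (N_mult (indicator U) (indicator V) :: 'a \<Rightarrow> real)" by simp
  have a: "N_add (indicator U) (indicator V) = (\<lambda>x. indicator (U \<inter> V) x + indicator (interior (closure (U \<union> V))) x :: real)"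
  proof -
    have "(\<lambda>x. indicator U x + indicator V x :: real) = (\<lambda>x. indicator (U \<inter> V) x + indicator (U \<union> V) x)"
      by (auto simp: fun_eq_iff indicator_def)
    then show ?thesis unfolding N_add_def using normalize_pair[of "U \<inter> V" "U \<union> V"] ro_inter[OF U V] by auto
  qed
  have "(\<lambda>x. indicator (U \<inter> V) x + indicator (interior (closure (U \<union> V))) x - indicator (U \<inter> V) x :: real)
     = indicator (interior (closure (U \<union> V)))" by (simp add: fun_eq_iff)
  then have "N_sub (N_add (indicator U) (indicator V)) (N_mult (indicator U) (indicator V))
      = normalize (indicator (interior (closure (U \<union> V))) :: 'a \<Rightarrow> real)"
    unfolding N_sub_def a m by simp
  also have "\<dots> = indicator (interior (closure (U \<union> V)))"
    using ro_intcl[of "U \<union> V"] normalize_ind unfolding regular_open_def by metis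
  finally show "indicator (interior (closure (U \<union> V))) =
             (N_sub (N_add (indicator U) (indicator V)) (N_mult (indicator U) (indicator V)) :: 'a \<Rightarrow> real)" by simp
next
  fix U :: "'a set" assume U: "regular_open U"
  have "(\<lambda>x. 1 - indicator U x :: real) = indicator (- U)" by (simp add: fun_eq_iff indicator_compl)
  then have "N_sub (\<lambda>_. 1) (indicator U) = (indicator (interior (closure (- U))) :: 'a \<Rightarrow> real)"
    unfolding N_sub_def by (simp add: normalize_ind)
  moreover have "closure (- U) = - U" using ro_open[OF U] by (simp add: closure_closed open_closed)
  ultimately show "indicator (interior (- U)) = (N_sub (\<lambda>_. 1) (indicator U) :: 'a \<Rightarrow> real)" by simp
qed

end
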